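(* Let $\mathbf{Q}(t)=(Q_1(t),\ldots,Q_K(t))$, $t\in\{0,1,2,\ldots\}$, be a stochastic vector process with real-valued components, let $L(\mathbf{Q})=\frac{1}{2}\sum_{k=1}^Kw_kQ_k^2$ with constants $w_k>0$, $\delta(t)=L(\mathbf{Q}(t+1))-L(\mathbf{Q}(t))$ and $d_k(t)=Q_k(t+1)-Q_k(t)$. Suppose there is a finite constant $D>0$ such that $\mathbb{E}[d_k(t)^4\mid\mathbf{Q}(t)]\leq D$ for all $k\in\{1,\ldots,K\}$, all $t$ and all possible $\mathbf{Q}(t)$, and that $\sum_{t=1}^\infty\mathbb{E}[Q_k(t)^2]/t^2<\infty$ for all $k$. Then $\sum_{t=1}^\infty\mathbb{E}[\delta(t)^2]/t^2<\infty$.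
   Context: "For all possible $\mathbf{Q}(t)$" means for every realization (almost surely). *)

theory Defs
  imports "HOL-Probability.Probability"
begin

definition lyap :: "real^'k::finite \<Rightarrow> real^'k \<Rightarrow> real" where
  "lyap w q = (1/2) * (\<Sum>k\<in>UNIV. w$k * (q$k)^2)"

definition gen_sigma :: "'a measure \<Rightarrow> ('a \<Rightarrow> real^'k::finite) \<Rightarrow> 'a measure" where
  "gen_sigma M X = vimage_algebra (space M) X borel"

end

theory Submission
  imports Defs
begin

lemma term_le:
  fixes w a d :: real
  shows "(w * (a*d + d^2/2))^2 \<le> w^2 * (a^2 + a^2*d^4 + d^4)"
proof -
  have e: "(a*d + d^2/2)^2 = a^2*d^2 + a*d*d^2 + (d^2)^2/4" by (simp add: power2_eq_square algebra_simps)
  have h1: "a*d*d^2 \<le> a^2*d^2 + (d^2)^2/4"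
  proof -
    have "0 \<le> (a*d - d^2/2)^2" by simp
    also have "\<dots> = a^2*d^2 + (d^2)^2/4 - a*d*d^2" by (simp add: power2_eq_square algebra_simps)
    finally show ?thesis by simp
  qed
  have h2: "2*(a^2*d^2) \<le> a^2 + a^2*(d^2)^2"
  proof -
    have "0 \<le> a^2*(1-d^2)^2" by simp
    also have "\<dots> = a^2 + a^2*(d^2)^2 - 2*(a^2*d^2)" by (simp add: power2_eq_square algebra_simps)
    finally show ?thesis by simp
  qed
  have d4: "d^4 = (d^2)^2" by simp
  have "(a*d + d^2/2)^2 \<le> a^2 + a^2*d^4 + d^4"
    unfolding e d4 using h1 h2 zero_le_power2[of "d^2"] by linarith
  then show ?thesis by (simp add: power_mult_distrib mult_left_mono)
qed

lemma pw:
  fixes a b w :: "real^'k::finite"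
  shows "(lyap w b - lyap w a)^2 \<le> (\<Sum>k\<in>UNIV. real CARD('k) * (w$k)^2 *
      ((a$k)^2 + (a$k)^2*(b$k-a$k)^4 + (b$k-a$k)^4))"
proof -
  have eq: "lyap w b - lyap w a = (\<Sum>k\<in>UNIV. w$k*(a$k*(b$k-a$k) + (b$k-a$k)^2/2))"
    unfolding lyap_def right_diff_distrib[symmetric] sum_subtractf[symmetric] sum_distrib_left
    by (rule sum.cong) (auto simp: power2_eq_square field_simps)
  have "(lyap w b - lyap w a)^2 \<le> (\<Sum>k\<in>UNIV. (w$k*(a$k*(b$k-a$k) + (b$k-a$k)^2/2))^2) * real CARD('k)"
    unfolding eq by (rule sum_squared_le_sum_of_squares)
  also have "\<dots> \<le> (\<Sum>k\<in>UNIV. (w$k)^2 * ((a$k)^2 + (a$k)^2*(b$k-a$k)^4 + (b$k-a$k)^4)) * real CARD('k)"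
    by (intro mult_right_mono sum_mono term_le) simp
  finally show ?thesis by (simp add: sum_distrib_left mult.assoc mult.commute)
qed

lemma subalg_gen:
  assumes "prob_space M" "X \<in> borel_measurable M"
  shows "finite_measure_subalgebra M (gen_sigma M X)"
proof -
  interpret prob_space M by fact
  have "sets (gen_sigma M X) \<subseteq> sets M"
    unfolding gen_sigma_def using sets_vimage_algebra2[of X "space M" borel] assms(2)
    by (auto intro: measurable_sets)
  then have "subalgebra M (gen_sigma M X)"
    unfolding subalgebra_def gen_sigma_def by simp
  then show ?thesis by unfold_locales
qed

lemma gen_meas: "X \<in> measurable (gen_sigma M X) borel"
  unfolding gen_sigma_def by (rule measurable_vimage_algebra1) simp

lemma cond_bound:
  assumes P: "prob_space M" and mX: "X \<in> borel_measurable M"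
    and g: "g \<in> borel_measurable M" and f: "f \<in> borel_measurable borel"
    and AE: "AE x in M. nn_cond_exp M (gen_sigma M X) g x \<le> ennreal D"
  shows "(\<integral>\<^sup>+ x. f (X x) * g x \<partial>M) \<le> ennreal D * (\<integral>\<^sup>+ x. f (X x) \<partial>M)"
proof -
  interpret finite_measure_subalgebra M "gen_sigma M X" using subalg_gen[OF P mX] .
  have fm: "(\<lambda>x. f (X x)) \<in> borel_measurable (gen_sigma M X)"
    using f gen_meas[of X M] by measurable
  have "(\<integral>\<^sup>+ x. f (X x) * g x \<partial>M) = (\<integral>\<^sup>+ x. f (X x) * nn_cond_exp M (gen_sigma M X) g x \<partial>M)"
    by (rule nn_cond_exp_intg[symmetric, OF fm g])
  also have "\<dots> \<le> (\<integral>\<^sup>+ x. ennreal D * f (X x) \<partial>M)"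
  proof (rule nn_integral_mono_AE)
    show "AE x in M. f (X x) * nn_cond_exp M (gen_sigma M X) g x \<le> ennreal D * f (X x)"
      using AE by eventually_elim (metis mult.commute mult_left_mono zero_le)
  qed
  also have "\<dots> = ennreal D * (\<integral>\<^sup>+ x. f (X x) \<partial>M)"
    using fm measurable_from_subalg[OF subalg fm] by (simp add: nn_integral_cmult)
  finally show ?thesis .
qed

lemma vec_nth_meas[measurable]: "(\<lambda>v::real^'k::finite. v $ k) \<in> borel_measurable borel"
  by (intro borel_measurable_continuous_onI continuous_intros)

lemma step_bound:
  fixes M :: "'a measure" and Q :: "nat \<Rightarrow> 'a \<Rightarrow> real^'k::finite" and w :: "real^'k"
  assumes P: "prob_space M"
    and meas: "\<And>t. Q t \<in> borel_measurable M"
    and D: "D \<ge> 0"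
    and fourth: "\<And>k. AE x in M.
         nn_cond_exp M (gen_sigma M (Q s)) (\<lambda>y. ennreal ((Q (Suc s) y $ k - Q s y $ k) ^ 4)) x
           \<le> ennreal D"
  shows "(\<integral>\<^sup>+ x. ennreal ((lyap w (Q (Suc s) x) - lyap w (Q s x))^2) \<partial>M)
     \<le> (\<Sum>k\<in>UNIV. ennreal (real CARD('k) * (w$k)^2) *
           (ennreal (1+D) * (\<integral>\<^sup>+ x. ennreal ((Q s x $ k)^2) \<partial>M) + ennreal D))"
proof -
  interpret prob_space M by fact
  note meas[measurable]
  define c where "c k = real CARD('k) * (w$k)^2" for k
  define A where "A k x = (Q s x $ k)^2" for k x
  define E where "E k x = (Q (Suc s) x $ k - Q s x $ k)^4" for k x
  have mA[measurable]: "(\<lambda>x. ennreal (A k x)) \<in> borel_measurable M" for k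
    unfolding A_def by measurable
  have mE[measurable]: "(\<lambda>x. ennreal (E k x)) \<in> borel_measurable M" for k
    unfolding E_def by measurable
  have c0: "0 \<le> c k" for k unfolding c_def by simp
  have A0: "0 \<le> A k x" for k x unfolding A_def by simp
  have E0: "0 \<le> E k x" for k x unfolding E_def by simp
  have "(\<integral>\<^sup>+ x. ennreal ((lyap w (Q (Suc s) x) - lyap w (Q s x))^2) \<partial>M)
     \<le> (\<integral>\<^sup>+ x. (\<Sum>k\<in>UNIV. ennreal (c k) * (ennreal (A k x) + ennreal (A k x) * ennreal (E k x) + ennreal (E k x))) \<partial>M)"
  proof (rule nn_integral_mono)
    fix x
    have "ennreal ((lyap w (Q (Suc s) x) - lyap w (Q s x))^2)
        \<le> ennreal (\<Sum>k\<in>UNIV. c k * (A k x + A k x * E k x + E k x))"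
      using pw[of w "Q (Suc s) x" "Q s x"] unfolding c_def A_def E_def by (intro ennreal_leI) simp
    also have "\<dots> = (\<Sum>k\<in>UNIV. ennreal (c k) * (ennreal (A k x) + ennreal (A k x) * ennreal (E k x) + ennreal (E k x)))"
      using c0 A0 E0 by (simp add: sum_ennreal[symmetric] ennreal_mult del: sum_ennreal)
    finally show "ennreal ((lyap w (Q (Suc s) x) - lyap w (Q s x))^2) \<le> \<dots>" .
  qed
  also have "\<dots> = (\<Sum>k\<in>UNIV. ennreal (c k) * ((\<integral>\<^sup>+ x. ennreal (A k x) \<partial>M) + (\<integral>\<^sup>+ x. ennreal (A k x) * ennreal (E k x) \<partial>M) + (\<integral>\<^sup>+ x. ennreal (E k x) \<partial>M)))"
    by (simp add: nn_integral_sum nn_integral_cmult nn_integral_add)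
  also have "\<dots> \<le> (\<Sum>k\<in>UNIV. ennreal (c k) * ((\<integral>\<^sup>+ x. ennreal (A k x) \<partial>M) + ennreal D * (\<integral>\<^sup>+ x. ennreal (A k x) \<partial>M) + ennreal D))"
  proof (intro sum_mono mult_left_mono add_mono order_refl)
    fix k
    have "(\<integral>\<^sup>+ x. (\<lambda>v. ennreal ((v $ k)^2)) (Q s x) * ennreal (E k x) \<partial>M) \<le> ennreal D * (\<integral>\<^sup>+ x. (\<lambda>v. ennreal ((v $ k)^2)) (Q s x) \<partial>M)"
      by (rule cond_bound[OF P meas mE _ fourth[unfolded E_def[symmetric]]]) measurable
    then show "(\<integral>\<^sup>+ x. ennreal (A k x) * ennreal (E k x) \<partial>M) \<le> ennreal D * (\<integral>\<^sup>+ x. ennreal (A k x) \<partial>M)"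
      unfolding A_def by simp
    have "(\<integral>\<^sup>+ x. (\<lambda>v. 1) (Q s x) * ennreal (E k x) \<partial>M) \<le> ennreal D * (\<integral>\<^sup>+ x. (\<lambda>v. 1) (Q s x) \<partial>M)"
      by (rule cond_bound[OF P meas mE _ fourth[unfolded E_def[symmetric]]]) measurable
    then show "(\<integral>\<^sup>+ x. ennreal (E k x) \<partial>M) \<le> ennreal D"
      by (simp add: emeasure_space_1)
  qed simp
  also have "\<dots> = (\<Sum>k\<in>UNIV. ennreal (c k) * (ennreal (1+D) * (\<integral>\<^sup>+ x. ennreal ((Q s x $ k)^2) \<partial>M) + ennreal D))"
  proof -
    have e: "ennreal (1+D) = 1 + ennreal D" using D by simp
    show ?thesis unfolding A_def e by (simp add: distrib_right)
  qed
  finally show ?thesis unfolding c_def .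
qed

theorem lemma2:
  fixes M :: "'a measure" and Q :: "nat \<Rightarrow> 'a \<Rightarrow> real^'k::finite"
    and w :: "real^'k" and D :: real
  assumes "prob_space M"
    and meas: "\<And>t. Q t \<in> borel_measurable M"
    and w_pos: "\<And>k. w$k > 0"
    and D_pos: "D > 0"
    and fourth: "\<And>k t. AE x in M.
         nn_cond_exp M (gen_sigma M (Q t)) (\<lambda>y. ennreal ((Q (Suc t) y $ k - Q t y $ k) ^ 4)) x
           \<le> ennreal D"
    and second: "\<And>k. (\<Sum>t. (\<integral>\<^sup>+ x. ennreal ((Q (Suc t) x $ k)^2) \<partial>M)
                              * ennreal (1 / (real (Suc t))^2)) < \<infinity>"
  shows "(\<Sum>t. (\<integral>\<^sup>+ x. ennreal ((lyap w (Q (Suc t + 1) x) - lyap w (Q (Suc t) x))^2) \<partial>M)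
               * ennreal (1 / (real (Suc t))^2)) < \<infinity>"
proof -
  define C where "C k = ennreal (real CARD('k) * (w$k)^2)" for k
  define I where "I k t = (\<integral>\<^sup>+ x. ennreal ((Q (Suc t) x $ k)^2) \<partial>M)" for k t
  define r where "r t = ennreal (1 / (real (Suc t))^2)" for t
  have rfin: "(\<Sum>t. r t) < \<infinity>"
  proof -
    have "summable (\<lambda>t. inverse (real (Suc t) ^ 2))"
      using inverse_power_summable[of 2, where 'a=real] by (subst summable_Suc_iff) simp
    then have sm: "summable (\<lambda>t. 1 / (real (Suc t))^2)" by (simp add: field_simps)
    have "(\<Sum>t. ennreal (1 / (real (Suc t))^2)) \<noteq> top"
      by (rule ennreal_suminf_neq_top[OF sm]) simp
    then show ?thesis unfolding r_def infinity_ennreal_def using top.not_eq_extremum by blast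
  qed
  have "(\<Sum>t. (\<integral>\<^sup>+ x. ennreal ((lyap w (Q (Suc t + 1) x) - lyap w (Q (Suc t) x))^2) \<partial>M)
               * ennreal (1 / (real (Suc t))^2))
     \<le> (\<Sum>t. (\<Sum>k\<in>UNIV. C k * (ennreal (1+D) * I k t + ennreal D)) * r t)"
  proof (rule suminf_le[OF _ summableI summableI])
    fix t
    have sb: "(\<integral>\<^sup>+ x. ennreal ((lyap w (Q (Suc (Suc t)) x) - lyap w (Q (Suc t) x))^2) \<partial>M)
     \<le> (\<Sum>k\<in>UNIV. C k * (ennreal (1+D) * I k t + ennreal D))"
      unfolding C_def I_def by (rule step_bound[where Q=Q and M=M and s="Suc t", OF assms(1) meas less_imp_le[OF D_pos] fourth])
    show "(\<integral>\<^sup>+ x. ennreal ((lyap w (Q (Suc t + 1) x) - lyap w (Q (Suc t) x))^2) \<partial>M)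
               * ennreal (1 / (real (Suc t))^2) \<le> (\<Sum>k\<in>UNIV. C k * (ennreal (1+D) * I k t + ennreal D)) * r t"
      unfolding r_def Suc_eq_plus1[symmetric] by (rule mult_right_mono[OF sb]) simp
  qed
  also have "\<dots> = (\<Sum>t. \<Sum>k\<in>UNIV. C k * ennreal (1+D) * (I k t * r t) + C k * ennreal D * r t)"
    by (rule arg_cong[where f=suminf], rule ext, subst sum_distrib_right, rule sum.cong, simp_all add: algebra_simps)
  also have "\<dots> = (\<Sum>k\<in>UNIV. \<Sum>t. C k * ennreal (1+D) * (I k t * r t) + C k * ennreal D * r t)"
    by (rule suminf_sum) (rule summableI)
  also have "\<dots> = (\<Sum>k\<in>UNIV. C k * ennreal (1+D) * (\<Sum>t. I k t * r t) + C k * ennreal D * (\<Sum>t. r t))"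
    by (simp add: suminf_add[symmetric])
  also have "\<dots> < \<infinity>"
  proof -
    have "C k * ennreal (1+D) * (\<Sum>t. I k t * r t) + C k * ennreal D * (\<Sum>t. r t) < \<infinity>" for k
      using second[of k] rfin unfolding I_def[symmetric] r_def[symmetric] C_def
      by (simp add: ennreal_mult_less_top)
    then show ?thesis by (simp add: sum_Pinfty)
  qed
  finally show ?thesis .
qed

end
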